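(* Let $A\overset{i}{\to}U\overset{j}{\to}S$ be an extension of a semilattice of groups $A$ by an inverse semigroup $S$, let $\rho,\rho'$ be transversals of $j$, and let $\Lambda=(\alpha,\lambda,f)$, $\Lambda'=(\alpha',\lambda',f')$ be the twisted $S$-module structures on $A$ induced by $\rho$ and $\rho'$ respectively. Then there is a function $g:S\to A$ with $g(s)\in A_{\alpha(ss^{-1})}$ for all $s$ such that (i) $\alpha'=\alpha$; (ii) $\lambda'_s=\xi_{g(s)}\circ\lambda_s$ for all $s\in S$; (iii) $f'(s,t)g(st)=g(s)\lambda_s(g(t))f(s,t)$ for all $s,t\in S$.
   Context: A semilattice of groups is an inverse semigroup $A$ whose idempotents are central; $A_e=\{a: aa^{-1}=a^{-1}a=e\}$ for $e\in E(A)$. An extension of $A$ by $S$ is an inverse semigroup $U$ with a monomorphism $i:A\to U$ and an idempotent-separating epimorphism $j:U\to S$ with $i(A)=j^{-1}(E(S))$. A transversal of $j$ is a map $\rho:S\to U$ with $j\circ\rho=\mathrm{id}_S$ and $\rho(E(S))\subseteq E(U)$. The twisted $S$-module structure induced by $\rho$ is $(\alpha,\lambda,f)$ where $\alpha=i^{-1}\circ\rho|_{E(S)}:E(S)\to E(A)$, $\lambda_s(a)=i^{-1}(\rho(s)i(a)\rho(s)^{-1})$ for $s\in S,a\in A$, and $f(s,t)$ is the unique element of $A_{\alpha(stt^{-1}s^{-1})}$ with $\rho(s)\rho(t)=i(f(s,t))\rho(st)$. For $b\in A$, $\xi_b$ is the inner endomorphism $\xi_b(a)=bab^{-1}$. 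*)

theory Defs
  imports Main
begin

definition inverse_semigroup :: "('a \<Rightarrow> 'a \<Rightarrow> 'a) \<Rightarrow> bool" where
  "inverse_semigroup m \<longleftrightarrow>
     (\<forall>x y z. m (m x y) z = m x (m y z)) \<and>
     (\<forall>x. \<exists>!y. m (m x y) x = x \<and> m (m y x) y = y)"

definition sinv :: "('a \<Rightarrow> 'a \<Rightarrow> 'a) \<Rightarrow> 'a \<Rightarrow> 'a" where
  "sinv m x = (THE y. m (m x y) x = x \<and> m (m y x) y = y)"

definition idems :: "('a \<Rightarrow> 'a \<Rightarrow> 'a) \<Rightarrow> 'a set" where
  "idems m = {e. m e e = e}"

definition semilattice_of_groups :: "('a \<Rightarrow> 'a \<Rightarrow> 'a) \<Rightarrow> bool" where
  "semilattice_of_groups m \<longleftrightarrow> inverse_semigroup m \<and>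
     (\<forall>e \<in> idems m. \<forall>x. m e x = m x e)"

definition comp_grp :: "('a \<Rightarrow> 'a \<Rightarrow> 'a) \<Rightarrow> 'a \<Rightarrow> 'a set" where
  "comp_grp m e = {a. m a (sinv m a) = e \<and> m (sinv m a) a = e}"

definition hom :: "('a \<Rightarrow> 'a \<Rightarrow> 'a) \<Rightarrow> ('b \<Rightarrow> 'b \<Rightarrow> 'b) \<Rightarrow> ('a \<Rightarrow> 'b) \<Rightarrow> bool" where
  "hom m n h \<longleftrightarrow> (\<forall>x y. h (m x y) = n (h x) (h y))"

definition extension ::
  "('a \<Rightarrow> 'a \<Rightarrow> 'a) \<Rightarrow> ('u \<Rightarrow> 'u \<Rightarrow> 'u) \<Rightarrow> ('s \<Rightarrow> 's \<Rightarrow> 's)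
    \<Rightarrow> ('a \<Rightarrow> 'u) \<Rightarrow> ('u \<Rightarrow> 's) \<Rightarrow> bool" where
  "extension mA mU mS i j \<longleftrightarrow>
     semilattice_of_groups mA \<and> inverse_semigroup mU \<and> inverse_semigroup mS \<and>
     hom mA mU i \<and> inj i \<and>
     hom mU mS j \<and> surj j \<and>
     (\<forall>e \<in> idems mU. \<forall>e' \<in> idems mU. j e = j e' \<longrightarrow> e = e') \<and>
     range i = j -` idems mS"

definition transversal ::
  "('u \<Rightarrow> 'u \<Rightarrow> 'u) \<Rightarrow> ('s \<Rightarrow> 's \<Rightarrow> 's) \<Rightarrow> ('u \<Rightarrow> 's) \<Rightarrow> ('s \<Rightarrow> 'u) \<Rightarrow> bool" where
  "transversal mU mS j \<rho> \<longleftrightarrow> (\<forall>s. j (\<rho> s) = s) \<and> \<rho> ` idems mS \<subseteq> idems mU"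

text \<open>Twisted S-module structure (alpha, lambda, f) induced by a transversal rho.
  alpha is only meaningful on E(S).\<close>
definition tw_alpha :: "('a \<Rightarrow> 'u) \<Rightarrow> ('s \<Rightarrow> 'u) \<Rightarrow> 's \<Rightarrow> 'a" where
  "tw_alpha i \<rho> e = inv i (\<rho> e)"

definition tw_lambda ::
  "('u \<Rightarrow> 'u \<Rightarrow> 'u) \<Rightarrow> ('a \<Rightarrow> 'u) \<Rightarrow> ('s \<Rightarrow> 'u) \<Rightarrow> 's \<Rightarrow> 'a \<Rightarrow> 'a" where
  "tw_lambda mU i \<rho> s a = inv i (mU (mU (\<rho> s) (i a)) (sinv mU (\<rho> s)))"

definition tw_f ::
  "('a \<Rightarrow> 'a \<Rightarrow> 'a) \<Rightarrow> ('u \<Rightarrow> 'u \<Rightarrow> 'u) \<Rightarrow> ('s \<Rightarrow> 's \<Rightarrow> 's)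
     \<Rightarrow> ('a \<Rightarrow> 'u) \<Rightarrow> ('s \<Rightarrow> 'u) \<Rightarrow> 's \<Rightarrow> 's \<Rightarrow> 'a" where
  "tw_f mA mU mS i \<rho> s t =
     (THE a. a \<in> comp_grp mA (tw_alpha i \<rho> (mS (mS s t) (sinv mS (mS s t)))) \<and>
             mU (\<rho> s) (\<rho> t) = mU (i a) (\<rho> (mS s t)))"

definition inner :: "('a \<Rightarrow> 'a \<Rightarrow> 'a) \<Rightarrow> 'a \<Rightarrow> 'a \<Rightarrow> 'a" where
  "inner m b a = m (m b a) (sinv m b)"

end

theory Submission
  imports Defs
begin


locale invsg = fixes m :: "'a \<Rightarrow> 'a \<Rightarrow> 'a" assumes isg: "inverse_semigroup m"
begin

lemma assoc[simp]: "m (m x y) z = m x (m y z)"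
  using isg unfolding inverse_semigroup_def by blast

lemma ax: "m (m x (sinv m x)) x = x \<and> m (m (sinv m x) x) (sinv m x) = sinv m x"
proof -
  have "\<exists>!y. m (m x y) x = x \<and> m (m y x) y = y" using isg unfolding inverse_semigroup_def by blast
  from theI'[OF this] show ?thesis unfolding sinv_def .
qed

lemma ax1[simp]: "m x (m (sinv m x) x) = x" using ax by simp
lemma ax2[simp]: "m (sinv m x) (m x (sinv m x)) = sinv m x" using ax by simp
lemma ax1'[simp]: "m x (m (sinv m x) (m x y)) = m x y"
  by (metis ax1 assoc)
lemma ax2'[simp]: "m (sinv m x) (m x (m (sinv m x) y)) = m (sinv m x) y"
  by (metis ax2 assoc)

lemma uniq: "m x (m y x) = x \<Longrightarrow> m y (m x y) = y \<Longrightarrow> sinv m x = y"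
proof -
  assume a: "m x (m y x) = x" "m y (m x y) = y"
  have "\<exists>!y. m (m x y) x = x \<and> m (m y x) y = y" using isg unfolding inverse_semigroup_def by blast
  then show ?thesis unfolding sinv_def using a by (intro the1_equality) auto
qed

lemma vv[simp]: "sinv m (sinv m x) = x"
  by (rule uniq) simp_all

lemma idem_v: "m e e = e \<Longrightarrow> sinv m e = e"
  by (rule uniq) (metis assoc)+

lemma idem_cont: "m e e = e \<Longrightarrow> m e (m e w) = m e w"
  by (metis assoc)

lemma prod_idem: assumes e: "m e e = e" and f: "m f f = f" shows "m (m e f) (m e f) = m e f"
proof -
  define x where "x = sinv m (m e f)"
  have x1: "m (m e f) (m x (m e f)) = m e f" unfolding x_def by (rule ax1)
  have x2: "m x (m (m e f) x) = x" unfolding x_def by (rule ax2)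
  have x2': "\<And>w. m x (m e (m f (m x w))) = m x w" by (metis x2 assoc)
  have "sinv m (m e f) = m f (m x e)"
  proof (rule uniq)
    show "m (m e f) (m (m f (m x e)) (m e f)) = m e f"
      using x1 e f by (simp add: idem_cont)
    show "m (m f (m x e)) (m (m e f) (m f (m x e))) = m f (m x e)"
      using x2' e f by (simp add: idem_cont)
  qed
  hence xe: "x = m f (m x e)" unfolding x_def .
  have "m x x = x"
  proof -
    have "m x x = m f (m x (m e (m f (m x e))))" by (subst xe, subst (2) xe) simp
    also have "\<dots> = m f (m x e)" using x2' by simp
    finally show ?thesis using xe by simp
  qed
  hence "sinv m x = x" by (rule idem_v)
  hence "m e f = x" unfolding x_def by simp
  thus ?thesis using \<open>m x x = x\<close> by simp
qed

lemma comm: assumes e: "m e e = e" and f: "m f f = f" shows "m e f = m f e"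
proof -
  have ef: "m (m e f) (m e f) = m e f" by (rule prod_idem[OF e f])
  have fe: "m (m f e) (m f e) = m f e" by (rule prod_idem[OF f e])
  have "sinv m (m e f) = m f e"
  proof (rule uniq)
    show "m (m e f) (m (m f e) (m e f)) = m e f"
      using ef e f by (simp add: idem_cont)
    show "m (m f e) (m (m e f) (m f e)) = m f e"
      using fe e f by (simp add: idem_cont)
  qed
  moreover have "sinv m (m e f) = m e f" using ef by (rule idem_v)
  ultimately show ?thesis by simp
qed

lemma xv_idem: "m x (sinv m x) \<in> idems m" unfolding idems_def by simp
lemma vx_idem: "m (sinv m x) x \<in> idems m" unfolding idems_def by simp

end

lemma hom_sinv:
  assumes "invsg m" "invsg n" "hom m n h"
  shows "sinv n (h x) = h (sinv m x)"
proof -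
  interpret M: invsg m by fact
  interpret N: invsg n by fact
  have hh: "\<And>x y. h (m x y) = n (h x) (h y)" using assms(3) unfolding hom_def by blast
  show ?thesis
  proof (rule N.uniq)
    show "n (h x) (n (h (sinv m x)) (h x)) = h x" by (metis hh M.ax1)
    show "n (h (sinv m x)) (n (h x) (h (sinv m x))) = h (sinv m x)" by (metis hh M.ax2)
  qed
qed



locale ext =
  fixes mA :: "'a \<Rightarrow> 'a \<Rightarrow> 'a" and mU :: "'u \<Rightarrow> 'u \<Rightarrow> 'u" and mS :: "'s \<Rightarrow> 's \<Rightarrow> 's"
    and i :: "'a \<Rightarrow> 'u" and j :: "'u \<Rightarrow> 's"
  assumes ext: "extension mA mU mS i j"
begin

sublocale U: invsg mU using ext unfolding extension_def invsg_def by blast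
sublocale S: invsg mS using ext unfolding extension_def invsg_def by blast
sublocale A: invsg mA using ext unfolding extension_def invsg_def semilattice_of_groups_def by blast

lemma i_mult[simp]: "i (mA a b) = mU (i a) (i b)"
  using ext unfolding extension_def hom_def by blast
lemma j_mult[simp]: "j (mU x y) = mS (j x) (j y)"
  using ext unfolding extension_def hom_def by blast
lemma i_v[simp]: "i (sinv mA a) = sinv mU (i a)"
  using ext hom_sinv[of mA mU i a] A.invsg_axioms U.invsg_axioms unfolding extension_def by simp
lemma j_v[simp]: "j (sinv mU x) = sinv mS (j x)"
  using ext hom_sinv[of mU mS j x] S.invsg_axioms U.invsg_axioms unfolding extension_def by simp
lemma inj_i: "inj i" using ext unfolding extension_def by blast
lemma inv_i[simp]: "inv i (i a) = a" using inj_i by simp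
lemma i_eq[simp]: "i a = i b \<longleftrightarrow> a = b" using inj_i by (simp add: inj_eq)
lemma rng: "x \<in> range i \<longleftrightarrow> j x \<in> idems mS"
  using ext unfolding extension_def by blast
lemma i_inv: "x \<in> range i \<Longrightarrow> i (inv i x) = x" by (simp add: f_inv_into_f)
lemma idsep: "mU e e = e \<Longrightarrow> mU e' e' = e' \<Longrightarrow> j e = j e' \<Longrightarrow> e = e'"
  using ext unfolding extension_def idems_def by blast
lemma central: "mA e e = e \<Longrightarrow> mA e x = mA x e"
  using ext unfolding extension_def semilattice_of_groups_def idems_def by blast

lemma same_j: assumes "j x = j z"
  shows "mU (sinv mU x) x = mU (sinv mU z) z" "mU x (sinv mU x) = mU z (sinv mU z)"
  by (rule idsep; simp add: assms)+

lemma same_j': assumes "j x = j z"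
  shows "mU (sinv mU x) (mU x w) = mU (sinv mU z) (mU z w)"
  by (metis same_j(1)[OF assms] U.assoc)

lemma inv_xz: assumes "j x = j z" shows "sinv mU (mU x (sinv mU z)) = mU z (sinv mU x)"
  by (rule U.uniq) (simp_all add: same_j'[OF assms] same_j(1)[OF assms])

lemma xv_rng: "mU x (sinv mU x) \<in> range i" by (simp add: rng S.xv_idem)
lemma vx_rng: "mU (sinv mU x) x \<in> range i" by (simp add: rng S.vx_idem)

lemma xz_rng: assumes "j x = j z" shows "mU x (sinv mU z) \<in> range i"
  using assms by (simp add: rng S.xv_idem)

lemma comp: assumes "j x = j z"
  shows "inv i (mU x (sinv mU z)) \<in> comp_grp mA (inv i (mU z (sinv mU z)))"
proof -
  define a where "a = inv i (mU x (sinv mU z))"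
  have ia: "i a = mU x (sinv mU z)" unfolding a_def by (rule i_inv[OF xz_rng[OF assms]])
  have "i (mA a (sinv mA a)) = mU z (sinv mU z)"
    apply (simp add: ia inv_xz[OF assms] same_j'[OF assms[symmetric]])
    by (metis same_j(2)[OF assms] U.ax2)
  hence 1: "mA a (sinv mA a) = inv i (mU z (sinv mU z))" by (metis inv_i)
  have "i (mA (sinv mA a) a) = mU z (sinv mU z)"
    by (simp add: ia inv_xz[OF assms] same_j'[OF assms] same_j(1)[OF assms])
  hence 2: "mA (sinv mA a) a = inv i (mU z (sinv mU z))" by (metis inv_i)
  show ?thesis using 1 2 unfolding comp_grp_def a_def by blast
qed

lemma comm_rng: assumes "x \<in> range i" "e \<in> range i" "mU e e = e"
  shows "mU x e = mU e x"
proof -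
  obtain a b where ab: "x = i a" "e = i b" using assms by blast
  have "mA b b = b" using assms(3) ab by (metis i_mult i_eq)
  thus ?thesis using ab central by (metis i_mult)
qed

lemma tr_j[simp]: "transversal mU mS j r \<Longrightarrow> j (r s) = s"
  unfolding transversal_def by blast
lemma tr_idem: "transversal mU mS j r \<Longrightarrow> e \<in> idems mS \<Longrightarrow> mU (r e) (r e) = r e"
  unfolding transversal_def idems_def by blast

lemma L1: assumes "transversal mU mS j r"
  shows "mU (r s) (sinv mU (r s)) = r (mS s (sinv mS s))"
  by (rule idsep) (simp_all add: assms tr_idem S.xv_idem)

lemma lam: assumes t: "transversal mU mS j r"
  shows "i (tw_lambda mU i r s a) = mU (r s) (mU (i a) (sinv mU (r s)))"
proof -
  have f: "mS (j (i a)) (j (i a)) = j (i a)" using rng[of "i a"] unfolding idems_def by simp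
  let ?f = "j (i a)"
  have c: "mS ?f (mS (sinv mS s) s) = mS (mS (sinv mS s) s) ?f"
    by (rule S.comm[OF f]) simp
  have c': "mS ?f (mS (sinv mS s) (mS s w)) = mS (sinv mS s) (mS s (mS ?f w))" for w
    by (metis c S.assoc)
  have "mS s (mS ?f (mS (sinv mS s) (mS s (mS ?f (sinv mS s))))) = mS s (mS ?f (sinv mS s))"
    by (simp add: c' S.idem_cont[OF f])
  hence "j (mU (r s) (mU (i a) (sinv mU (r s)))) \<in> idems mS"
    using t unfolding idems_def by simp
  hence "mU (r s) (mU (i a) (sinv mU (r s))) \<in> range i" by (simp add: rng)
  then show ?thesis unfolding tw_lambda_def by (simp add: i_inv)
qed

lemma comp_unique: assumes "a \<in> comp_grp mA (inv i (mU z (sinv mU z)))"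
  shows "a = inv i (mU (i a) (mU z (sinv mU z)))"
proof -
  have "mA (sinv mA a) a = inv i (mU z (sinv mU z))" using assms unfolding comp_grp_def by blast
  hence "i (mA (sinv mA a) a) = mU z (sinv mU z)" by (metis i_inv xv_rng)
  hence "mU (i a) (mU z (sinv mU z)) = i a"
    by (metis i_mult i_v U.ax1 U.assoc)
  thus ?thesis by simp
qed

lemma f_eq: assumes t: "transversal mU mS j r"
  shows "tw_f mA mU mS i r s t = inv i (mU (mU (r s) (r t)) (sinv mU (r (mS s t))))"
proof -
  let ?x = "mU (r s) (r t)" and ?z = "r (mS s t)"
  have jxz: "j ?x = j ?z" using t by simp
  have al: "tw_alpha i r (mS (mS s t) (sinv mS (mS s t))) = inv i (mU ?z (sinv mU ?z))"
    unfolding tw_alpha_def using L1[OF t] by simp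
  let ?F = "inv i (mU ?x (sinv mU ?z))"
  have iF: "i ?F = mU ?x (sinv mU ?z)" by (rule i_inv[OF xz_rng[OF jxz]])
  show ?thesis unfolding tw_f_def al
  proof (rule the1_equality)
    show "\<exists>!a. a \<in> comp_grp mA (inv i (mU ?z (sinv mU ?z))) \<and> mU (r s) (r t) = mU (i a) ?z"
    proof (rule ex1I[of _ ?F])
      show "?F \<in> comp_grp mA (inv i (mU ?z (sinv mU ?z))) \<and> mU (r s) (r t) = mU (i ?F) ?z"
        using comp[OF jxz] iF same_j(1)[OF jxz] by (metis U.ax1 U.assoc)
      fix b assume b: "b \<in> comp_grp mA (inv i (mU ?z (sinv mU ?z))) \<and> mU (r s) (r t) = mU (i b) ?z"
      have "b = inv i (mU (i b) (mU ?z (sinv mU ?z)))" using b comp_unique by blast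
      also have "\<dots> = ?F" using b by (metis U.assoc)
      finally show "b = ?F" .
    qed
    show "?F \<in> comp_grp mA (inv i (mU ?z (sinv mU ?z))) \<and> mU (r s) (r t) = mU (i ?F) ?z"
      using comp[OF jxz] iF same_j(1)[OF jxz] by (metis U.ax1 U.assoc)
  qed
qed

end


context ext begin

lemma main:
  fixes \<rho> \<rho>' :: "'s \<Rightarrow> 'u"
  assumes t: "transversal mU mS j \<rho>" and t': "transversal mU mS j \<rho>'"
  shows "\<exists>g :: 's \<Rightarrow> 'a.
     (\<forall>s. g s \<in> comp_grp mA (tw_alpha i \<rho> (mS s (sinv mS s)))) \<and>
     (\<forall>e \<in> idems mS. tw_alpha i \<rho>' e = tw_alpha i \<rho> e) \<and>
     (\<forall>s a. tw_lambda mU i \<rho>' s a = inner mA (g s) (tw_lambda mU i \<rho> s a)) \<and>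
     (\<forall>s t. mA (tw_f mA mU mS i \<rho>' s t) (g (mS s t)) =
            mA (mA (g s) (tw_lambda mU i \<rho> s (g t))) (tw_f mA mU mS i \<rho> s t))"
proof -
  define g where "g s = inv i (mU (\<rho>' s) (sinv mU (\<rho> s)))" for s
  have jj: "j (\<rho>' s) = j (\<rho> s)" for s using t t' by simp
  have ig: "i (g s) = mU (\<rho>' s) (sinv mU (\<rho> s))" for s
    unfolding g_def by (rule i_inv[OF xz_rng[OF jj]])
  have h: "mU (sinv mU (\<rho> s)) (mU (\<rho> s) w) = mU (sinv mU (\<rho>' s)) (mU (\<rho>' s) w)" for s w
    by (rule same_j'[OF jj[symmetric]])
  have h0: "mU (sinv mU (\<rho> s)) (\<rho> s) = mU (sinv mU (\<rho>' s)) (\<rho>' s)" for s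
    by (rule same_j(1)[OF jj[symmetric]])
  have A: "g s \<in> comp_grp mA (tw_alpha i \<rho> (mS s (sinv mS s)))" for s
    unfolding tw_alpha_def g_def L1[OF t, symmetric] by (rule comp[OF jj])
  have B: "tw_alpha i \<rho>' e = tw_alpha i \<rho> e" if "e \<in> idems mS" for e
  proof -
    have "\<rho>' e = \<rho> e" by (rule idsep) (simp_all add: tr_idem t t' that)
    thus ?thesis unfolding tw_alpha_def by simp
  qed
  have C: "tw_lambda mU i \<rho>' s a = inner mA (g s) (tw_lambda mU i \<rho> s a)" for s a
  proof -
    have "i (tw_lambda mU i \<rho>' s a) = i (inner mA (g s) (tw_lambda mU i \<rho> s a))"
      unfolding inner_def
      by (simp add: lam[OF t] lam[OF t'] ig inv_xz[OF jj] h)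
    thus ?thesis by simp
  qed
  have D: "mA (tw_f mA mU mS i \<rho>' s t) (g (mS s t)) =
            mA (mA (g s) (tw_lambda mU i \<rho> s (g t))) (tw_f mA mU mS i \<rho> s t)" for s t
  proof -
    let ?z = "\<rho> (mS s t)"
    have r1: "i (tw_f mA mU mS i \<rho>' s t) = mU (mU (\<rho>' s) (\<rho>' t)) (sinv mU (\<rho>' (mS s t)))"
      unfolding f_eq[OF t'] by (rule i_inv[OF xz_rng]) (simp add: t')
    have r2: "i (tw_f mA mU mS i \<rho> s t) = mU (mU (\<rho> s) (\<rho> t)) (sinv mU ?z)"
      unfolding f_eq[OF t] by (rule i_inv[OF xz_rng]) (simp add: t)
    have cm: "mU (i (g t)) (mU (sinv mU (\<rho> s)) (\<rho> s)) = mU (mU (sinv mU (\<rho> s)) (\<rho> s)) (i (g t))"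
      by (rule comm_rng) (simp_all add: vx_rng)
    have cm': "mU (i (g t)) (mU (sinv mU (\<rho> s)) (mU (\<rho> s) w)) = mU (sinv mU (\<rho> s)) (mU (\<rho> s) (mU (i (g t)) w))" for w
      by (metis cm U.assoc)
    have L: "i (mA (tw_f mA mU mS i \<rho>' s t) (g (mS s t))) = mU (\<rho>' s) (mU (\<rho>' t) (sinv mU ?z))"
      by (simp add: r1 ig h[symmetric])
    have R: "i (mA (mA (g s) (tw_lambda mU i \<rho> s (g t))) (tw_f mA mU mS i \<rho> s t)) =
       mU (\<rho>' s) (mU (\<rho>' t) (sinv mU ?z))"
    proof -
      have "i (mA (mA (g s) (tw_lambda mU i \<rho> s (g t))) (tw_f mA mU mS i \<rho> s t)) =
         mU (\<rho>' s) (mU (sinv mU (\<rho> s)) (mU (\<rho> s) (mU (i (g t)) (mU (sinv mU (\<rho> s)) (mU (\<rho> s) (mU (\<rho> t) (sinv mU ?z)))))))"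
        by (simp add: lam[OF t] r2 ig[of s])
      also have "\<dots> = mU (\<rho>' s) (mU (sinv mU (\<rho> s)) (mU (\<rho> s) (mU (i (g t)) (mU (\<rho> t) (sinv mU ?z)))))"
        by (simp add: cm')
      also have "\<dots> = mU (\<rho>' s) (mU (\<rho>' t) (sinv mU ?z))"
        by (simp add: ig h)
      finally show ?thesis .
    qed
    from L R have "i (mA (tw_f mA mU mS i \<rho>' s t) (g (mS s t))) =
       i (mA (mA (g s) (tw_lambda mU i \<rho> s (g t))) (tw_f mA mU mS i \<rho> s t))" by (simp only:)
    thus ?thesis by (simp only: i_eq)
  qed
  show ?thesis using A B C D by blast
qed

end

theorem proposition3p10:
  fixes mA :: "'a \<Rightarrow> 'a \<Rightarrow> 'a" and mU :: "'u \<Rightarrow> 'u \<Rightarrow> 'u" and mS :: "'s \<Rightarrow> 's \<Rightarrow> 's"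
    and i :: "'a \<Rightarrow> 'u" and j :: "'u \<Rightarrow> 's" and \<rho> \<rho>' :: "'s \<Rightarrow> 'u"
  assumes "extension mA mU mS i j"
    and "transversal mU mS j \<rho>" and "transversal mU mS j \<rho>'"
  shows "\<exists>g :: 's \<Rightarrow> 'a.
     (\<forall>s. g s \<in> comp_grp mA (tw_alpha i \<rho> (mS s (sinv mS s)))) \<and>
     (\<forall>e \<in> idems mS. tw_alpha i \<rho>' e = tw_alpha i \<rho> e) \<and>
     (\<forall>s a. tw_lambda mU i \<rho>' s a = inner mA (g s) (tw_lambda mU i \<rho> s a)) \<and>
     (\<forall>s t. mA (tw_f mA mU mS i \<rho>' s t) (g (mS s t)) =
            mA (mA (g s) (tw_lambda mU i \<rho> s (g t))) (tw_f mA mU mS i \<rho> s t))"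
    using ext.main[of mA mU mS i j \<rho> \<rho>'] assms unfolding ext_def by blast

end
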